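(* Consider a convex $n$-gon with vertices $0,\dots,n-1$ in cyclic order, and integers $0<a<b<c<n-1$. Let $V_R=\{0,\dots,a-1\}$, $V_B=\{a,\dots,b-1\}$, $V_L=\{b,\dots,c-1\}$, $V_T=\{c,\dots,n-1\}$. Let $B_Q$ be the set of all edges $(i,j)$ with $i\in V_R$, $j\in V_L$, together with all edges $(i,j)$ with $i\in V_T$, $j\in V_B$. Then $B_Q$ is an $(n,m)$-blocker with $m=|V_R|\cdot|V_L|+|V_T|\cdot|V_B|$.
   Context: An edge $(i,j)$ is the segment between vertices $i,j$; boundary edges are $(i,i+1)$ (indices mod $n$), diagonals are the other edges. Two edges cross if they share an interior point. A triangulation is a maximal set of pairwise non-crossing diagonals. A blocker is a set $B$ of diagonals having a diagonal in common with every triangulation; it is saturated if for every $e\in B$, $B\setminus\{e\}$ is not a blocker. An $(n,k)$-blocker is a saturated blocker of size $k$ for a convex $n$-gon. *)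

theory Defs
  imports Main
begin

text \<open>For vertices in convex position, two edges
share an interior point iff their endpoints are four distinct vertices that
strictly interleave in the cyclic order.\<close>

definition is_diagonal :: "nat \<Rightarrow> nat set \<Rightarrow> bool" where
  "is_diagonal n e \<longleftrightarrow>
     (\<exists>i j. e = {i, j} \<and> i < j \<and> j < n \<and> j \<noteq> i + 1 \<and> \<not> (i = 0 \<and> j = n - 1))"

definition diagonals :: "nat \<Rightarrow> nat set set" where
  "diagonals n = {e. is_diagonal n e}"

definition crosses :: "nat set \<Rightarrow> nat set \<Rightarrow> bool" where
  "crosses e f \<longleftrightarrow>
     (\<exists>i j k l. i < k \<and> k < j \<and> j < l \<and>
        ((e = {i, j} \<and> f = {k, l}) \<or> (e = {k, l} \<and> f = {i, j})))"

definition noncrossing :: "nat set set \<Rightarrow> bool" where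
  "noncrossing S \<longleftrightarrow> (\<forall>e\<in>S. \<forall>f\<in>S. \<not> crosses e f)"

definition triangulation :: "nat \<Rightarrow> nat set set \<Rightarrow> bool" where
  "triangulation n T \<longleftrightarrow>
     T \<subseteq> diagonals n \<and> noncrossing T \<and>
     (\<forall>S. T \<subseteq> S \<and> S \<subseteq> diagonals n \<and> noncrossing S \<longrightarrow> S = T)"

definition blocker :: "nat \<Rightarrow> nat set set \<Rightarrow> bool" where
  "blocker n B \<longleftrightarrow> B \<subseteq> diagonals n \<and> (\<forall>T. triangulation n T \<longrightarrow> B \<inter> T \<noteq> {})"

definition saturated_blocker :: "nat \<Rightarrow> nat set set \<Rightarrow> bool" where
  "saturated_blocker n B \<longleftrightarrow> blocker n B \<and> (\<forall>e\<in>B. \<not> blocker n (B - {e}))"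

definition nk_blocker :: "nat \<Rightarrow> nat \<Rightarrow> nat set set \<Rightarrow> bool" where
  "nk_blocker n k B \<longleftrightarrow> saturated_blocker n B \<and> finite B \<and> card B = k"

end

theory Submission
  imports Defs
begin

lemma crosses_iff:
  assumes "x < y" "k < l"
  shows "crosses {x,y} {k,l} \<longleftrightarrow> (x<k \<and> k<y \<and> y<l) \<or> (k<x \<and> x<l \<and> l<y)"
  using assms unfolding crosses_def doubleton_eq_iff by auto

lemma crosses_sym: "crosses e f \<Longrightarrow> crosses f e"
  unfolding crosses_def by blast

lemma diag_cases: "e \<in> diagonals n \<Longrightarrow> \<exists>k l. e = {k,l} \<and> k<l \<and> l<n"
  unfolding diagonals_def is_diagonal_def by auto

lemma diagI: "p<q \<Longrightarrow> q<n \<Longrightarrow> q \<noteq> p+1 \<Longrightarrow> \<not>(p=0 \<and> q = n-1) \<Longrightarrow> {p,q} \<in> diagonals n"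
  unfolding diagonals_def is_diagonal_def by blast

lemma finite_diagonals: "finite (diagonals n)"
  by (rule finite_subset[of _ "Pow {..<n}"]) (auto simp: diagonals_def is_diagonal_def)

lemma extend_triang:
  assumes "S0 \<subseteq> diagonals n" "noncrossing S0"
  shows "\<exists>T. triangulation n T \<and> S0 \<subseteq> T"
proof -
  let ?F = "{S. S0 \<subseteq> S \<and> S \<subseteq> diagonals n \<and> noncrossing S}"
  have fin: "finite ?F"
    by (rule finite_subset[of _ "Pow (diagonals n)"]) (auto simp: finite_diagonals)
  have S0F: "S0 \<in> ?F" using assms by auto
  define m where "m = Max (card ` ?F)"
  have "m \<in> card ` ?F" unfolding m_def using fin S0F by (intro Max_in) auto
  then obtain T where T: "T \<in> ?F" "card T = m" by auto
  have le: "card S \<le> card T" if "S \<in> ?F" for S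
    using T(2) fin that unfolding m_def by auto
  have "triangulation n T"
    unfolding triangulation_def
  proof (intro conjI allI impI)
    show "T \<subseteq> diagonals n" "noncrossing T" using T by auto
    fix S assume S: "T \<subseteq> S \<and> S \<subseteq> diagonals n \<and> noncrossing S"
    then have "S \<in> ?F" using T by auto
    then have "card S \<le> card T" by (rule le)
    moreover have "finite S" using S finite_diagonals finite_subset by blast
    ultimately show "S = T" using S card_seteq by blast
  qed
  then show ?thesis using T by auto
qed

definition BQ :: "nat \<Rightarrow> nat \<Rightarrow> nat \<Rightarrow> nat \<Rightarrow> nat set set" where
  "BQ n a b c = {{i, j} | i j. i \<in> {0..<a} \<and> j \<in> {b..<c}} \<union>
            {{i, j} | i j. i \<in> {c..<n} \<and> j \<in> {a..<b}}"

lemma hits: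
  assumes "0<a" "a<b" "b<c" "c<n-1" and T: "triangulation n T"
  shows "BQ n a b c \<inter> T \<noteq> {}"
proof
  assume no0: "BQ n a b c \<inter> T = {}"
  note no = no0[unfolded disjoint_iff, rule_format]
  have noRL: "{k,l} \<notin> T" if "k<a" "b\<le>l" "l<c" for k l
  proof -
    have "{k,l} \<in> BQ n a b c" unfolding BQ_def using that by auto
    then show ?thesis using no by auto
  qed
  have noTB: "{k,l} \<notin> T" if "a\<le>k" "k<b" "c\<le>l" "l<n" for k l
  proof -
    have "{l,k} \<in> BQ n a b c" unfolding BQ_def using that by auto
    then show ?thesis using no by (metis insert_commute)
  qed
  have Tsub: "T \<subseteq> diagonals n" and Tnc: "noncrossing T"
    and Tmax: "\<And>S. T \<subseteq> S \<Longrightarrow> S \<subseteq> diagonals n \<Longrightarrow> noncrossing S \<Longrightarrow> S = T"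
    using T unfolding triangulation_def by auto
  define X where "X = {k. k<a \<and> (\<exists>l. c\<le>l \<and> {k,l} \<in> T)}"
  define x where "x = Max (insert 0 X)"
  have finX: "finite X" unfolding X_def by (rule finite_subset[of _ "{..<a}"]) auto
  have xin: "x \<in> insert 0 X" unfolding x_def using finX by (intro Max_in) auto
  have xa: "x < a" using xin assms(1) unfolding X_def by auto
  have xge: "k \<le> x" if "k \<in> X" for k using that finX by (simp add: x_def)
  have xX: "x \<in> X" if "x \<noteq> 0" using xin that by auto
  define Y where "Y = {l. b\<le>l \<and> l<c \<and> (\<exists>k. a\<le>k \<and> k<b \<and> {k,l} \<in> T)}"
  define y where "y = Max (insert b Y)"
  have finY: "finite Y" unfolding Y_def by (rule finite_subset[of _ "{..<c}"]) auto
  have yin: "y \<in> insert b Y" unfolding y_def using finY by (intro Max_in) auto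
  have yb: "b \<le> y" "y < c" using yin assms unfolding Y_def by auto
  have yge: "l \<le> y" if "l \<in> Y" for l using that finY by (simp add: y_def)
  have yY: "y \<in> Y" if "y \<noteq> b" using yin that by auto
  have xy: "x < y" using xa yb assms by linarith
  have free: "\<not> crosses {x,y} f" if fT: "f\<in>T" for f
  proof
    assume cr: "crosses {x,y} f"
    obtain k l where f: "f={k,l}" "k<l" "l<n" using diag_cases Tsub fT by blast
    from cr have "(x<k \<and> k<y \<and> y<l) \<or> (k<x \<and> x<l \<and> l<y)"
      using crosses_iff[OF xy f(2)] f(1) by simp
    then show False
    proof
      assume A: "x<k \<and> k<y \<and> y<l"
      show False
      proof (cases "k<a \<and> c \<le> l")
        case True
        then have "k \<in> X" using fT f unfolding X_def by auto
        with xge A show False by force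
      next
        case False
        consider "a\<le>k \<and> k<b \<and> l<c" | "k<a \<and> l<c" | "a\<le>k \<and> k<b \<and> c\<le>l" | "b \<le> k"
          using False by linarith
        then show False
        proof cases
          case 1
          then have "l \<in> Y" using fT f A yb unfolding Y_def by auto
          then show False using yge A by force
        next
          case 2
          then show False using noRL[of k l] A yb fT f by auto
        next
          case 3
          then show False using noTB[of k l] fT f by auto
        next
          case 4
          then have "y \<in> Y" using yY A by auto
          then obtain k0 where k0: "a\<le>k0" "k0<b" "{k0,y} \<in> T" unfolding Y_def by auto
          have "crosses {k0,y} {k,l}" using crosses_iff[of k0 y k l] k0 4 A f by auto
          then show False using Tnc k0 fT f unfolding noncrossing_def by auto
        qed
      qed
    next
      assume B: "k<x \<and> x<l \<and> l<y"
      then have "x \<in> X" using xX by auto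
      then obtain l0 where l0: "c\<le>l0" "{x,l0} \<in> T" unfolding X_def by auto
      have "crosses {k,l} {x,l0}" using crosses_iff[of k l x l0] l0 B yb by auto
      then show False using Tnc l0 fT f unfolding noncrossing_def by auto
    qed
  qed
  have diag: "{x,y} \<in> diagonals n"
    using xa yb assms by (intro diagI) auto
  have "noncrossing (insert {x,y} T)"
    unfolding noncrossing_def
  proof (intro ballI)
    fix e f assume e: "e \<in> insert {x,y} T" and f: "f \<in> insert {x,y} T"
    have ee: "\<not> crosses {x,y} {x,y}" using crosses_iff[OF xy xy] by simp
    have "e = {x,y} \<or> e \<in> T" "f = {x,y} \<or> f \<in> T" using e f by auto
    then show "\<not> crosses e f"
    proof (elim disjE)
      assume "e = {x,y}" "f = {x,y}" then show ?thesis using ee by simp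
    next
      assume "e = {x,y}" "f \<in> T" then show ?thesis using free by simp
    next
      assume "e \<in> T" "f = {x,y}" then show ?thesis using free crosses_sym by blast
    next
      assume "e \<in> T" "f \<in> T" then show ?thesis using Tnc unfolding noncrossing_def by blast
    qed
  qed
  moreover have "T \<subseteq> insert {x,y} T" "insert {x,y} T \<subseteq> diagonals n" using diag Tsub by auto
  ultimately have "insert {x,y} T = T" using Tmax by blast
  then have "{x,y} \<in> T" by auto
  then show False using noRL[of x y] xa yb by auto
qed

lemma quad_nc:
  fixes p1 p2 p3 p4 :: nat
  assumes o: "p1<p2" "p2<p3" "p3<p4" and d: "d = {p1,p3} \<or> d = {p2,p4}"
    and S: "S \<subseteq> {{p1,p2},{p2,p3},{p3,p4},{p1,p4},d}"
  shows "noncrossing S"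
  unfolding noncrossing_def
proof (intro ballI notI)
  fix e f assume e: "e \<in> S" and f: "f \<in> S" and cr: "crosses e f"
  have sub: "g \<subseteq> {p1,p2,p3,p4}" if "g \<in> S" for g
    using that S d by blast
  obtain i j k l where ijkl: "i<k" "k<j" "j<l"
    and eq: "(e = {i,j} \<and> f = {k,l}) \<or> (e = {k,l} \<and> f = {i,j})"
    using cr unfolding crosses_def by blast
  have ij: "{i,j} \<in> S" "{k,l} \<in> S" using eq e f by auto
  have m: "i \<in> {p1,p2,p3,p4}" "j \<in> {p1,p2,p3,p4}" "k \<in> {p1,p2,p3,p4}" "l \<in> {p1,p2,p3,p4}"
    using sub[OF ij(1)] sub[OF ij(2)] by (simp_all only: insert_subset)
  have k2: "k \<ge> p2" using m(1,3) ijkl(1) o by auto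
  have j3: "j \<ge> p3" using m(2) k2 ijkl(2) o by auto
  have l4: "l = p4" using m(4) j3 ijkl(3) o by auto
  have j3': "j \<le> p3" using m(2,4) ijkl(3) o by auto
  have k2': "k \<le> p2" using m(3) j3' ijkl(2) o by auto
  have i1: "i = p1" using m(1) k2' ijkl(1) o by auto
  have "k = p2" "j = p3" using k2 k2' j3 j3' by auto
  note * = i1 l4 this
  have in13: "{p1,p3} \<in> S" and in24: "{p2,p4} \<in> S" using eq e f * by auto
  have n13: "{p1,p3} \<noteq> {p1,p2}" "{p1,p3} \<noteq> {p2,p3}" "{p1,p3} \<noteq> {p3,p4}" "{p1,p3} \<noteq> {p1,p4}"
    using o by (auto simp: doubleton_eq_iff)
  have n24: "{p2,p4} \<noteq> {p1,p2}" "{p2,p4} \<noteq> {p2,p3}" "{p2,p4} \<noteq> {p3,p4}" "{p2,p4} \<noteq> {p1,p4}"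
    using o by (auto simp: doubleton_eq_iff)
  have "{p1,p3} = d" using in13 S n13 by blast
  moreover have "{p2,p4} = d" using in24 S n24 by blast
  moreover have "{p1,p3} \<noteq> {p2,p4}" using o by (auto simp: doubleton_eq_iff)
  ultimately show False by simp
qed

lemma notblock_gen:
  assumes "S0 \<subseteq> diagonals n" "noncrossing S0" "\<And>f. f \<in> B \<Longrightarrow> \<exists>g\<in>S0. crosses f g"
  shows "\<not> blocker n B"
proof
  assume bl: "blocker n B"
  obtain T where T: "triangulation n T" "S0 \<subseteq> T" using extend_triang assms(1,2) by blast
  have "B \<inter> T \<noteq> {}" using bl T(1) unfolding blocker_def by simp
  then obtain f where f: "f \<in> B" "f \<in> T" by blast
  then obtain g where g: "g \<in> S0" "crosses f g" using assms(3) by blast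
  have "noncrossing T" using T(1) unfolding triangulation_def by simp
  then show False using g f T(2) unfolding noncrossing_def by blast
qed

lemma notblock_RL:
  assumes "0<a" "a<b" "b<c" "c<n-1" "x<a" "b\<le>y" "y<c"
  shows "\<not> blocker n (BQ n a b c - {{x,y}})"
proof (rule notblock_gen)
  define S0 where "S0 = insert {x,y} ({{x,a},{a,y},{y,c},{x,c}} \<inter> diagonals n)"
  show "S0 \<subseteq> diagonals n" unfolding S0_def using assms by (auto intro!: diagI)
  show "noncrossing S0"
    by (rule quad_nc[of x a y c "{x,y}"]) (use assms in \<open>auto simp: S0_def\<close>)
  fix f assume f: "f \<in> BQ n a b c - {{x,y}}"
  then consider x' y' where "f={x',y'}" "x'<a" "b\<le>y'" "y'<c"
    | z u where "f={z,u}" "c\<le>z" "z<n" "a\<le>u" "u<b"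
    unfolding BQ_def by auto
  then show "\<exists>g\<in>S0. crosses f g"
  proof cases
    case 1
    have ne: "x'\<noteq>x \<or> y'\<noteq>y" using 1 f by auto
    consider "x'<x \<and> y'<y \<or> x'>x \<and> y'>y" | "x'>x \<and> y'\<le>y" | "x'=x \<and> y'<y"
      | "x'<x \<and> y'\<ge>y" | "x'=x \<and> y'>y" using ne by linarith
    then show ?thesis
    proof cases
      case 1
      then show ?thesis using \<open>f={x',y'}\<close> \<open>b\<le>y'\<close> \<open>x'<a\<close> assms
        by (intro bexI[of _ "{x,y}"]) (auto simp: S0_def crosses_iff)
    next
      case 2
      have "{x,a} \<in> S0" unfolding S0_def using 2 \<open>x'<a\<close> assms by (auto intro!: diagI)
      moreover have "crosses f {x,a}" using 2 \<open>f={x',y'}\<close> \<open>x'<a\<close> \<open>b\<le>y'\<close> assms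
        by (auto simp: crosses_iff)
      ultimately show ?thesis by blast
    next
      case 3
      have "{a,y} \<in> S0" unfolding S0_def using 3 \<open>b\<le>y'\<close> assms by (auto intro!: diagI)
      moreover have "crosses f {a,y}" using 3 \<open>f={x',y'}\<close> \<open>x'<a\<close> \<open>b\<le>y'\<close> assms
        by (auto simp: crosses_iff)
      ultimately show ?thesis by blast
    next
      case 4
      have "{x,c} \<in> S0" unfolding S0_def using 4 assms by (auto intro!: diagI)
      moreover have "crosses f {x,c}" using 4 \<open>f={x',y'}\<close> \<open>y'<c\<close> \<open>b\<le>y'\<close> assms
        by (auto simp: crosses_iff)
      ultimately show ?thesis by blast
    next
      case 5
      have "{y,c} \<in> S0" unfolding S0_def using 5 \<open>y'<c\<close> assms by (auto intro!: diagI)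
      moreover have "crosses f {y,c}" using 5 \<open>f={x',y'}\<close> \<open>y'<c\<close> \<open>b\<le>y'\<close> assms
        by (auto simp: crosses_iff)
      ultimately show ?thesis by blast
    qed
  next
    case 2
    then have "f = {u,z}" by auto
    then have "crosses f {x,y}" using 2 assms by (auto simp: crosses_iff)
    then show ?thesis unfolding S0_def by blast
  qed
qed

lemma notblock_TB:
  assumes "0<a" "a<b" "b<c" "c<n-1" "c\<le>z" "z<n" "a\<le>u" "u<b"
  shows "\<not> blocker n (BQ n a b c - {{z,u}})"
proof (rule notblock_gen)
  define S0 where "S0 = insert {u,z} ({{0,u},{u,b},{b,z},{0,z}} \<inter> diagonals n)"
  show "S0 \<subseteq> diagonals n" unfolding S0_def using assms by (auto intro!: diagI)
  show "noncrossing S0"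
    by (rule quad_nc[of 0 u b z "{u,z}"]) (use assms in \<open>auto simp: S0_def\<close>)
  fix f assume f: "f \<in> BQ n a b c - {{z,u}}"
  then consider x' y' where "f={x',y'}" "x'<a" "b\<le>y'" "y'<c"
    | z' u' where "f={u',z'}" "c\<le>z'" "z'<n" "a\<le>u'" "u'<b"
    unfolding BQ_def by (auto simp: insert_commute)
  then show "\<exists>g\<in>S0. crosses f g"
  proof cases
    case 1
    then have "crosses f {u,z}" using assms by (auto simp: crosses_iff)
    then show ?thesis unfolding S0_def by blast
  next
    case 2
    have ne: "u'\<noteq>u \<or> z'\<noteq>z" using 2 f by (auto simp: insert_commute)
    consider "u'<u \<and> z'<z \<or> u'>u \<and> z'>z" | "u'>u \<and> z'\<le>z" | "u'=u \<and> z'<z"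
      | "u'<u \<and> z'\<ge>z" | "u'=u \<and> z'>z" using ne by linarith
    then show ?thesis
    proof cases
      case 1
      then show ?thesis using 2 assms
        by (intro bexI[of _ "{u,z}"]) (auto simp: S0_def crosses_iff)
    next
      case 3
      have "{b,z} \<in> S0" unfolding S0_def using 3 2 assms by (auto intro!: diagI)
      moreover have "crosses f {b,z}" using 3 2 assms
        by (auto simp: crosses_iff)
      ultimately show ?thesis by blast
    next
      case 2
      have "{u,b} \<in> S0" unfolding S0_def using 2 \<open>u'<b\<close> assms by (auto intro!: diagI)
      moreover have "crosses f {u,b}" using 2 \<open>f={u',z'}\<close> \<open>u'<b\<close> \<open>c\<le>z'\<close> assms
        by (auto simp: crosses_iff)
      ultimately show ?thesis by blast
    next
      case 4
      have "{0,u} \<in> S0" unfolding S0_def using 4 \<open>a\<le>u'\<close> assms by (auto intro!: diagI)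
      moreover have "crosses f {0,u}" using 4 \<open>f={u',z'}\<close> \<open>a\<le>u'\<close> assms
        by (auto simp: crosses_iff)
      ultimately show ?thesis by blast
    next
      case 5
      have "{0,z} \<in> S0" unfolding S0_def using 5 \<open>z'<n\<close> assms by (auto intro!: diagI)
      moreover have "crosses f {0,z}" using 5 \<open>f={u',z'}\<close> \<open>z'<n\<close> assms
        by (auto simp: crosses_iff)
      ultimately show ?thesis by blast
    qed
  qed
qed

theorem proposition3p1:
  fixes n a b c :: nat
  assumes "0 < a" and "a < b" and "b < c" and "c < n - 1"
  shows "nk_blocker n
           (card {0..<a} * card {b..<c} + card {c..<n} * card {a..<b})
           ({{i, j} | i j. i \<in> {0..<a} \<and> j \<in> {b..<c}} \<union>
            {{i, j} | i j. i \<in> {c..<n} \<and> j \<in> {a..<b}})"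
proof -
  let ?B1 = "{{i, j} | i j. i \<in> {0..<a} \<and> j \<in> {b..<c}}"
  let ?B2 = "{{i, j} | i j. i \<in> {c..<n} \<and> j \<in> {a..<b}}"
  have e1: "?B1 = (\<lambda>(i,j). {i,j}) ` ({0..<a} \<times> {b..<c})" by (auto simp: image_iff) metis
  have e2: "?B2 = (\<lambda>(i,j). {i,j}) ` ({c..<n} \<times> {a..<b})" by (auto simp: image_iff) metis
  have i1: "inj_on (\<lambda>(i,j). {i,j}) ({0..<a} \<times> {b..<c})"
    using assms by (auto simp: inj_on_def doubleton_eq_iff)
  have i2: "inj_on (\<lambda>(i,j). {i::nat,j}) ({c..<n} \<times> {a..<b})"
    using assms by (auto simp: inj_on_def doubleton_eq_iff)
  have c1: "card ?B1 = card {0..<a} * card {b..<c}"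
    unfolding e1 card_image[OF i1] card_cartesian_product ..
  have c2: "card ?B2 = card {c..<n} * card {a..<b}"
    unfolding e2 card_image[OF i2] card_cartesian_product ..
  have f1: "finite ?B1" "finite ?B2" unfolding e1 e2 by auto
  have dj: "?B1 \<inter> ?B2 = {}" using assms by (auto simp: doubleton_eq_iff)
  have card: "card (?B1 \<union> ?B2) = card {0..<a} * card {b..<c} + card {c..<n} * card {a..<b}"
    using card_Un_disjoint[OF f1 dj] c1 c2 by simp
  have sub: "?B1 \<union> ?B2 \<subseteq> diagonals n"
  proof
    fix e assume "e \<in> ?B1 \<union> ?B2"
    then consider i j where "e = {i,j}" "i<a" "b\<le>j" "j<c" | i j where "e={j,i}" "c\<le>i" "i<n" "a\<le>j" "j<b"
      by (auto simp: insert_commute)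
    then show "e \<in> diagonals n"
      by cases (use assms in \<open>auto intro!: diagI\<close>)
  qed
  have bl: "blocker n (?B1 \<union> ?B2)"
    unfolding blocker_def using sub hits[OF assms] unfolding BQ_def by blast
  have sat: "\<not> blocker n (?B1 \<union> ?B2 - {e})" if "e \<in> ?B1 \<union> ?B2" for e
  proof -
    from that consider i j where "e = {i,j}" "i<a" "b\<le>j" "j<c" | i j where "e={i,j}" "c\<le>i" "i<n" "a\<le>j" "j<b"
      by auto
    then show ?thesis
    proof cases
      case 1
      then show ?thesis using notblock_RL[OF assms, of i j] unfolding BQ_def by simp
    next
      case 2
      then show ?thesis using notblock_TB[OF assms, of i j] unfolding BQ_def by simp
    qed
  qed
  show ?thesis
    unfolding nk_blocker_def saturated_blocker_def
    using bl sat card f1 by blast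
qed

end
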